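(* Let $n\ge 1$, $N=2^n$, and let $U$ be an $n$-qubit unitary, specified by a quantum circuit, with $U\ket{0}_n = \ket{\psi}_n = \sum_{j=0}^{N-1}\psi_j\ket{j}_n$ where $\psi_j\in\mathbb{C}$ and $\sum_j|\psi_j|^2=1$. Then one can construct a $(1, n+3, 0)$-block-encoding $U_A$ of the diagonal matrix $A = \mathrm{diag}(\psi_0,\dots,\psi_{N-1})$ with $O(n)$ circuit depth (in single- and two-qubit gates) and a total of $O(1)$ queries to a controlled-$U$ gate.
   Context: Block-encoding: for an $s$-qubit operator $A$, $\alpha,\epsilon\ge 0$ and $a\in\mathbb{N}$, an $(s+a)$-qubit unitary $V$ is an $(\alpha,a,\epsilon)$-block-encoding of $A$ if $\|A - \alpha(\bra{0}^{\otimes a}\otimes I)V(\ket{0}^{\otimes a}\otimes I)\|\le\epsilon$ (operator norm). *)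

theory Defs
  imports Complex_Main "Jordan_Normal_Form.Matrix"
begin

definition adj :: "complex mat \<Rightarrow> complex mat" where
  "adj A = mat (dim_col A) (dim_row A) (\<lambda>(i,j). cnj (A $$ (j,i)))"

definition unitary_mat :: "nat \<Rightarrow> complex mat \<Rightarrow> bool" where
  "unitary_mat d U \<longleftrightarrow> U \<in> carrier_mat d d \<and> adj U * U = 1\<^sub>m d"

definition vnorm :: "complex vec \<Rightarrow> real" where
  "vnorm v = sqrt (\<Sum>i<dim_vec v. (cmod (v $ i))^2)"

definition opnorm :: "complex mat \<Rightarrow> real" where
  "opnorm M = Sup {vnorm (M *\<^sub>v v) | v. v \<in> carrier_vec (dim_col M) \<and> vnorm v \<le> 1}"

definition diag_of_vec :: "complex vec \<Rightarrow> complex mat" where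
  "diag_of_vec v = mat (dim_vec v) (dim_vec v) (\<lambda>(i,j). if i = j then v $ i else 0)"

text \<open>Basis states of an (a+s)-qubit register are indexed by k < 2^(a+s), the ancilla
  register being the most significant a qubits (tensor order ancilla \<otimes> system).
  Hence (\<langle>0|^a \<otimes> I) V (|0\<rangle>^a \<otimes> I) is the upper-left 2^s x 2^s block of V.\<close>
definition top_block :: "nat \<Rightarrow> complex mat \<Rightarrow> complex mat" where
  "top_block s V = mat (2^s) (2^s) (\<lambda>(i,j). V $$ (i,j))"

definition block_encoding ::
  "nat \<Rightarrow> complex mat \<Rightarrow> real \<Rightarrow> nat \<Rightarrow> real \<Rightarrow> complex mat \<Rightarrow> bool" where
  "block_encoding s A \<alpha> a \<epsilon> V \<longleftrightarrow>
     A \<in> carrier_mat (2^s) (2^s) \<and> unitary_mat (2^(s+a)) V \<and>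
     opnorm (A - complex_of_real \<alpha> \<cdot>\<^sub>m top_block s V) \<le> \<epsilon>"

text \<open>Qubits of an m-qubit register are numbered 0..m-1, qubit 0 being the most
  significant bit of the basis index.\<close>
definition qbit :: "nat \<Rightarrow> nat \<Rightarrow> nat \<Rightarrow> nat" where
  "qbit m k q = (k div 2^(m - 1 - q)) mod 2"

fun sub_index :: "nat \<Rightarrow> nat \<Rightarrow> nat list \<Rightarrow> nat" where
  "sub_index m k [] = 0"
| "sub_index m k (q # qs) = qbit m k q * 2^(length qs) + sub_index m k qs"

text \<open>The m-qubit matrix of a 2^|qs|-dimensional matrix G acting on the qubits qs
  (identity on all other qubits).\<close>
definition embed :: "nat \<Rightarrow> nat list \<Rightarrow> complex mat \<Rightarrow> complex mat" where
  "embed m qs G = mat (2^m) (2^m) (\<lambda>(k,l).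
     if (\<forall>q<m. q \<notin> set qs \<longrightarrow> qbit m k q = qbit m l q)
     then G $$ (sub_index m k qs, sub_index m l qs) else 0)"

text \<open>Controlled version |0\<rangle>\<langle>0| \<otimes> I + |1\<rangle>\<langle>1| \<otimes> U (control = most significant qubit).\<close>
definition ctrl :: "complex mat \<Rightarrow> complex mat" where
  "ctrl U = mat (2 * dim_row U) (2 * dim_row U) (\<lambda>(i,j).
     let d = dim_row U in
     if i < d \<and> j < d then (if i = j then 1 else 0)
     else if d \<le> i \<and> d \<le> j then U $$ (i - d, j - d) else 0)"

text \<open>A gate is either a fixed (U-independent) unitary on the listed qubits, or a query
  to controlled-U (False) / controlled-U-dagger (True); for a query the qubit list is the
  control qubit followed by the n target qubits.\<close>
datatype gate = Fixed "complex mat" "nat list" | Query bool "nat list"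

fun gate_qubits :: "gate \<Rightarrow> nat list" where
  "gate_qubits (Fixed G qs) = qs"
| "gate_qubits (Query b qs) = qs"

fun is_query :: "gate \<Rightarrow> bool" where
  "is_query (Fixed G qs) = False"
| "is_query (Query b qs) = True"

fun wf_gate :: "nat \<Rightarrow> nat \<Rightarrow> gate \<Rightarrow> bool" where
  "wf_gate m n (Fixed G qs) \<longleftrightarrow> distinct qs \<and> set qs \<subseteq> {..<m} \<and>
      length qs \<in> {1, 2} \<and> unitary_mat (2^length qs) G"
| "wf_gate m n (Query b qs) \<longleftrightarrow> distinct qs \<and> set qs \<subseteq> {..<m} \<and> length qs = n + 1"

fun gate_mat :: "nat \<Rightarrow> complex mat \<Rightarrow> gate \<Rightarrow> complex mat" where
  "gate_mat m U (Fixed G qs) = embed m qs G"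
| "gate_mat m U (Query b qs) = embed m qs (ctrl (if b then adj U else U))"

type_synonym layer = "gate list"

definition wf_layer :: "nat \<Rightarrow> nat \<Rightarrow> layer \<Rightarrow> bool" where
  "wf_layer m n L \<longleftrightarrow> (\<forall>g \<in> set L. wf_gate m n g) \<and>
     (\<forall>i < length L. \<forall>j < length L. i \<noteq> j \<longrightarrow>
        set (gate_qubits (L ! i)) \<inter> set (gate_qubits (L ! j)) = {})"

definition layer_mat :: "nat \<Rightarrow> complex mat \<Rightarrow> layer \<Rightarrow> complex mat" where
  "layer_mat m U L = foldr (\<lambda>g M. gate_mat m U g * M) L (1\<^sub>m (2^m))"

text \<open>A circuit is a list of layers, the first layer being applied first.\<close>
type_synonym circuit = "layer list"

definition wf_circuit :: "nat \<Rightarrow> nat \<Rightarrow> circuit \<Rightarrow> bool" where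
  "wf_circuit m n C \<longleftrightarrow> (\<forall>L \<in> set C. wf_layer m n L)"

definition circuit_mat :: "nat \<Rightarrow> complex mat \<Rightarrow> circuit \<Rightarrow> complex mat" where
  "circuit_mat m U C = foldl (\<lambda>M L. layer_mat m U L * M) (1\<^sub>m (2^m)) C"

definition depth :: "circuit \<Rightarrow> nat" where
  "depth C = length C"

definition num_queries :: "circuit \<Rightarrow> nat" where
  "num_queries C = (\<Sum>L \<leftarrow> C. length (filter is_query L))"

end

theory Submission
  imports Defs
begin


lemma qbit_bit: "qbit m k q = (if bit k (m - 1 - q) then 1 else 0)"
  by (simp add: qbit_def bit_iff_odd mod2_eq_if)

lemma qbit_lt2: "qbit m k q < 2"
  by (simp add: qbit_def)

lemma nat_high_bit: "(k::nat) < 2^m \<Longrightarrow> m \<le> p \<Longrightarrow> \<not> bit k p"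
  by (metis bit_take_bit_iff not_le take_bit_nat_eq_self_iff)

lemma bits_eq: "(k::nat) < 2^m \<Longrightarrow> l < 2^m \<Longrightarrow> (\<forall>p<m. bit k p = bit l p) \<Longrightarrow> k = l"
  by (metis bit_eq_iff nat_high_bit not_less)

lemma ex_bits: "\<exists>k::nat. k < 2^m \<and> (\<forall>p<m. bit k p = \<gamma> p)"
proof (induction m arbitrary: \<gamma>)
  case 0 then show ?case by auto
next
  case (Suc m)
  from Suc.IH[of "\<lambda>p. \<gamma> (Suc p)"] obtain k' :: nat where k': "k' < 2^m" "\<forall>p<m. bit k' p = \<gamma> (Suc p)" by blast
  define k where "k = of_bool (\<gamma> 0) + 2 * k'"
  have "k < 2^Suc m" using k'(1) unfolding k_def by (cases "\<gamma> 0") auto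
  moreover have "\<forall>p<Suc m. bit k p = \<gamma> p"
  proof (intro allI impI)
    fix p assume "p < Suc m"
    show "bit k p = \<gamma> p"
    proof (cases p)
      case 0 then show ?thesis unfolding k_def by (simp add: bit_0)
    next
      case (Suc p') then show ?thesis using k'(2) \<open>p < Suc m\<close> unfolding k_def
        by (simp add: bit_Suc)
    qed
  qed
  ultimately show ?case by blast
qed

lemma xor_lt: "(a::nat) < 2^m \<Longrightarrow> b < 2^m \<Longrightarrow> xor a b < 2^m"
  by (metis take_bit_nat_eq_self_iff take_bit_xor)

lemma sub_lt: "sub_index m k qs < 2^length qs"
proof (induction qs)
  case Nil then show ?case by simp
next
  case (Cons q qs)
  have "qbit m k q \<le> 1" using qbit_lt2[of m k q] by simp
  then have h: "qbit m k q * 2^length qs \<le> 2^length qs" by simp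
  show ?case using Cons.IH h by (simp only: sub_index.simps length_Cons power_Suc)
qed

lemma sub_eq_bits: "sub_index m k qs = sub_index m l qs \<Longrightarrow> q \<in> set qs \<Longrightarrow> qbit m k q = qbit m l q"
proof (induction qs)
  case Nil then show ?case by simp
next
  case (Cons p ps)
  let ?L = "2^length ps :: nat"
  have e: "qbit m k p * ?L + sub_index m k ps = qbit m l p * ?L + sub_index m l ps"
    using Cons.prems(1) by simp
  have d: "(x * ?L + y) div ?L = x" "(x * ?L + y) mod ?L = y" if "y < ?L" for x y
    using that by auto
  have "qbit m k p = qbit m l p" using d(1)[OF sub_lt[of m k ps], of "qbit m k p"] d(1)[OF sub_lt[of m l ps], of "qbit m l p"] e by metis
  moreover have "sub_index m k ps = sub_index m l ps"
    using d(2)[OF sub_lt[of m k ps], of "qbit m k p"] d(2)[OF sub_lt[of m l ps], of "qbit m l p"] e by metis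
  ultimately show ?case using Cons by auto
qed

fun assign :: "nat list \<Rightarrow> nat \<Rightarrow> nat \<Rightarrow> nat" where
  "assign [] a q = 0"
| "assign (p#ps) a q = (if q = p then a div 2^length ps else assign ps (a mod 2^length ps) q)"

lemma assign_lt: "a < 2^length qs \<Longrightarrow> assign qs a q < 2"
proof (induction qs arbitrary: a)
  case Nil then show ?case by simp
next
  case (Cons p ps)
  then show ?case by (auto simp: less_mult_imp_div_less mult.commute)
qed

lemma sub_assign: "distinct qs \<Longrightarrow> a < 2^length qs \<Longrightarrow> (\<forall>q\<in>set qs. qbit m r q = assign qs a q)
   \<Longrightarrow> sub_index m r qs = a"
proof (induction qs arbitrary: a)
  case Nil then show ?case by simp
next
  case (Cons p ps)
  have "sub_index m r ps = a mod 2^length ps"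
    using Cons by (intro Cons.IH) auto
  moreover have "qbit m r p = a div 2^length ps" using Cons.prems by simp
  ultimately show ?case by (simp add: div_mult_mod_eq)
qed

lemma all_qbits_eq: "k < 2^m \<Longrightarrow> l < 2^m \<Longrightarrow> (\<forall>q<m. qbit m k q = qbit m l q) \<Longrightarrow> k = l"
proof -
  assume a: "k < 2^m" "l < 2^m" "\<forall>q<m. qbit m k q = qbit m l q"
  have "\<forall>p<m. bit k p = bit l p"
  proof (intro allI impI)
    fix p assume "p < m"
    then have "qbit m k (m - 1 - p) = qbit m l (m - 1 - p)" using a(3) by simp
    moreover have "m - 1 - (m - 1 - p) = p" using \<open>p<m\<close> by simp
    ultimately show "bit k p = bit l p" by (simp add: qbit_bit split: if_splits)
  qed
  then show ?thesis using a bits_eq by blast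
qed

lemma ex_qbits: "(\<forall>q<m. \<beta> q < (2::nat)) \<Longrightarrow> \<exists>r. r < 2^m \<and> (\<forall>q<m. qbit m r q = \<beta> q)"
proof -
  assume b: "\<forall>q<m. \<beta> q < 2"
  obtain r :: nat where r: "r < 2^m" "\<forall>p<m. bit r p = (\<beta> (m - 1 - p) = 1)"
    using ex_bits[of m "\<lambda>p. \<beta> (m - 1 - p) = 1"] by blast
  have "\<forall>q<m. qbit m r q = \<beta> q"
  proof (intro allI impI)
    fix q assume "q < m"
    then have "m - 1 - q < m" "m - 1 - (m - 1 - q) = q" by auto
    then show "qbit m r q = \<beta> q" using r(2) b \<open>q<m\<close> by (auto simp: qbit_bit)
  qed
  then show ?thesis using r(1) by blast
qed

definition eqv :: "nat \<Rightarrow> nat list \<Rightarrow> nat \<Rightarrow> nat \<Rightarrow> bool" where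
  "eqv m qs k l \<longleftrightarrow> (\<forall>q<m. q \<notin> set qs \<longrightarrow> qbit m k q = qbit m l q)"

lemma embed_index: "k < 2^m \<Longrightarrow> l < 2^m \<Longrightarrow>
  embed m qs G $$ (k,l) = (if eqv m qs k l then G $$ (sub_index m k qs, sub_index m l qs) else 0)"
  by (simp add: embed_def eqv_def)

lemma embed_carrier: "embed m qs G \<in> carrier_mat (2^m) (2^m)"
  by (simp add: embed_def)

lemma sub_bij:
  assumes "distinct qs" "set qs \<subseteq> {..<m}"
  shows "bij_betw (\<lambda>r. sub_index m r qs) {r. r < 2^m \<and> eqv m qs r k} {..<2^length qs}"
  unfolding bij_betw_def
proof (intro conjI)
  show "inj_on (\<lambda>r. sub_index m r qs) {r. r < 2^m \<and> eqv m qs r k}"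
  proof (rule inj_onI)
    fix r1 r2 assume r1: "r1 \<in> {r. r < 2^m \<and> eqv m qs r k}" and r2: "r2 \<in> {r. r < 2^m \<and> eqv m qs r k}"
      and e: "sub_index m r1 qs = sub_index m r2 qs"
    have "\<forall>q<m. qbit m r1 q = qbit m r2 q"
    proof (intro allI impI)
      fix q assume "q < m"
      show "qbit m r1 q = qbit m r2 q"
      proof (cases "q \<in> set qs")
        case True then show ?thesis using sub_eq_bits[OF e] by blast
      next
        case False then show ?thesis using r1 r2 \<open>q<m\<close> unfolding eqv_def by simp
      qed
    qed
    then show "r1 = r2" using r1 r2 all_qbits_eq by blast
  qed
  show "(\<lambda>r. sub_index m r qs) ` {r. r < 2^m \<and> eqv m qs r k} = {..<2^length qs}"
  proof
    show "(\<lambda>r. sub_index m r qs) ` {r. r < 2^m \<and> eqv m qs r k} \<subseteq> {..<2^length qs}"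
      using sub_lt by auto
    show "{..<2^length qs} \<subseteq> (\<lambda>r. sub_index m r qs) ` {r. r < 2^m \<and> eqv m qs r k}"
    proof
      fix a :: nat assume "a \<in> {..<2^length qs}"
      then have a: "a < 2^length qs" by simp
      define \<beta> where "\<beta> q = (if q \<in> set qs then assign qs a q else qbit m k q)" for q
      have "\<forall>q<m. \<beta> q < 2" unfolding \<beta>_def using assign_lt[OF a] qbit_lt2 by auto
      then obtain r where r: "r < 2^m" "\<forall>q<m. qbit m r q = \<beta> q" using ex_qbits by blast
      have "eqv m qs r k" using r unfolding eqv_def \<beta>_def by auto
      moreover have "sub_index m r qs = a"
        using assms r a by (intro sub_assign) (auto simp: \<beta>_def)
      ultimately show "a \<in> (\<lambda>r. sub_index m r qs) ` {r. r < 2^m \<and> eqv m qs r k}"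
        using r(1) by (intro image_eqI[of a _ r]) auto
    qed
  qed
qed



lemma adj_carrier: "A \<in> carrier_mat r c \<Longrightarrow> adj A \<in> carrier_mat c r"
  by (simp add: adj_def)

lemma adj_index: "i < dim_col A \<Longrightarrow> j < dim_row A \<Longrightarrow> adj A $$ (i,j) = cnj (A $$ (j,i))"
  by (simp add: adj_def)

lemma adj_dims[simp]: "dim_row (adj A) = dim_col A" "dim_col (adj A) = dim_row A"
  by (simp_all add: adj_def)

lemma adj_mult_index:
  assumes "A \<in> carrier_mat r c" "B \<in> carrier_mat r d" "i < c" "j < d"
  shows "(adj A * B) $$ (i,j) = (\<Sum>k<r. cnj (A $$ (k,i)) * B $$ (k,j))"
  using assms by (simp add: index_mult_mat scalar_prod_def adj_index atLeast0LessThan)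

lemma eqv_sym: "eqv m qs k l \<Longrightarrow> eqv m qs l k" by (auto simp: eqv_def)
lemma eqv_trans: "eqv m qs k l \<Longrightarrow> eqv m qs l j \<Longrightarrow> eqv m qs k j" by (auto simp: eqv_def)
lemma eqv_refl: "eqv m qs k k" by (auto simp: eqv_def)

lemma unitary_embed:
  assumes dq: "distinct qs" "set qs \<subseteq> {..<m}" and G: "unitary_mat (2^length qs) G"
  shows "unitary_mat (2^m) (embed m qs G)"
proof -
  let ?E = "embed m qs G"
  let ?s = "\<lambda>r. sub_index m r qs"
  have Gc: "G \<in> carrier_mat (2^length qs) (2^length qs)" and GG: "adj G * G = 1\<^sub>m (2^length qs)"
    using G by (auto simp: unitary_mat_def)
  have "adj ?E * ?E = 1\<^sub>m (2^m)"
  proof (rule eq_matI)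
    show "dim_row (adj ?E * ?E) = dim_row (1\<^sub>m (2^m))" "dim_col (adj ?E * ?E) = dim_col (1\<^sub>m (2^m))"
      by (simp_all add: embed_def)
    fix k l assume "k < dim_row (1\<^sub>m (2^m))" "l < dim_col (1\<^sub>m (2^m))"
    then have kl: "k < 2^m" "l < 2^m" by auto
    have "(adj ?E * ?E) $$ (k,l) = (\<Sum>r<2^m. cnj (?E $$ (r,k)) * ?E $$ (r,l))"
      using kl by (intro adj_mult_index[OF embed_carrier embed_carrier])
    also have "\<dots> = 1\<^sub>m (2^m) $$ (k,l)"
    proof (cases "eqv m qs k l")
      case True
      let ?h = "\<lambda>a. cnj (G $$ (a, ?s k)) * G $$ (a, ?s l)"
      have "(\<Sum>r<2^m. cnj (?E $$ (r,k)) * ?E $$ (r,l)) = (\<Sum>r<2^m. if eqv m qs r k then ?h (?s r) else 0)"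
        using True kl by (intro sum.cong) (auto simp: embed_index dest: eqv_trans eqv_sym)
      also have "\<dots> = (\<Sum>r\<in>{r. r < 2^m \<and> eqv m qs r k}. ?h (?s r))"
        by (simp add: sum.If_cases lessThan_def Collect_conj_eq Int_commute)
      also have "\<dots> = (\<Sum>a<2^length qs. ?h a)"
        by (rule sum.reindex_bij_betw[OF sub_bij[OF dq]])
      also have "\<dots> = (adj G * G) $$ (?s k, ?s l)"
        using Gc sub_lt by (intro adj_mult_index[symmetric]) auto
      also have "\<dots> = (if ?s k = ?s l then 1 else 0)"
        using GG sub_lt by simp
      also have "\<dots> = (if k = l then 1 else 0)"
      proof -
        have "?s k = ?s l \<Longrightarrow> k = l"
          using True sub_eq_bits[of m k qs l] kl all_qbits_eq unfolding eqv_def by metis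
        then show ?thesis by auto
      qed
      finally show ?thesis using kl by simp
    next
      case False
      have "(\<Sum>r<2^m. cnj (?E $$ (r,k)) * ?E $$ (r,l)) = 0"
        using False kl by (intro sum.neutral) (auto simp: embed_index dest: eqv_trans eqv_sym)
      moreover have "k \<noteq> l" using False eqv_refl by metis
      ultimately show ?thesis using kl by simp
    qed
    finally show "(adj ?E * ?E) $$ (k,l) = 1\<^sub>m (2^m) $$ (k,l)" .
  qed
  then show ?thesis by (simp add: unitary_mat_def embed_carrier)
qed

lemma ctrl_carrier: "U \<in> carrier_mat d d \<Longrightarrow> ctrl U \<in> carrier_mat (2*d) (2*d)"
  by (simp add: ctrl_def)

lemma unitary_ctrl:
  assumes U: "unitary_mat d U"
  shows "unitary_mat (2*d) (ctrl U)"
proof -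
  have Uc: "U \<in> carrier_mat d d" and UU: "adj U * U = 1\<^sub>m d" using U by (auto simp: unitary_mat_def)
  let ?C = "ctrl U"
  have Ci: "?C $$ (i,j) = (if i < d \<and> j < d then (if i = j then 1 else 0)
     else if d \<le> i \<and> d \<le> j then U $$ (i - d, j - d) else 0)" if "i < 2*d" "j < 2*d" for i j
    using that Uc by (simp add: ctrl_def)
  have "adj ?C * ?C = 1\<^sub>m (2*d)"
  proof (rule eq_matI)
    show "dim_row (adj ?C * ?C) = dim_row (1\<^sub>m (2*d))" "dim_col (adj ?C * ?C) = dim_col (1\<^sub>m (2*d))"
      using Uc by (simp_all add: ctrl_def)
    fix i j assume "i < dim_row (1\<^sub>m (2*d))" "j < dim_col (1\<^sub>m (2*d))"
    then have ij: "i < 2*d" "j < 2*d" by auto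
    let ?f = "\<lambda>r. cnj (?C $$ (r,i)) * ?C $$ (r,j)"
    have "(adj ?C * ?C) $$ (i,j) = (\<Sum>r<2*d. ?f r)"
      using ij by (intro adj_mult_index[OF ctrl_carrier[OF Uc] ctrl_carrier[OF Uc]])
    also have "\<dots> = (\<Sum>r<d. ?f r) + (\<Sum>r<d. ?f (r + d))"
    proof -
      have "(\<Sum>r<2*d. ?f r) = (\<Sum>r\<in>{0..<d}. ?f r) + (\<Sum>r\<in>{d..<d+d}. ?f r)"
        by (simp add: atLeast0LessThan[symmetric] mult_2 sum.atLeastLessThan_concat)
      also have "(\<Sum>r\<in>{d..<d+d}. ?f r) = (\<Sum>r\<in>{0..<d}. ?f (r + d))"
        using sum.shift_bounds_nat_ivl[of ?f 0 d d] by simp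
      finally show ?thesis by (simp add: atLeast0LessThan)
    qed
    also have "(\<Sum>r<d. ?f r) = (if i < d \<and> j < d \<and> i = j then 1 else 0)"
    proof -
      have "(\<Sum>r<d. ?f r) = (\<Sum>r<d. if r = i then (if i < d \<and> j < d \<and> i = j then 1 else 0) else 0)"
        using ij by (intro sum.cong) (auto simp: Ci)
      then show ?thesis by (simp add: sum.delta)
    qed
    also have "(\<Sum>r<d. ?f (r + d)) = (if d \<le> i \<and> d \<le> j then (adj U * U) $$ (i - d, j - d) else 0)"
    proof (cases "d \<le> i \<and> d \<le> j")
      case True
      then show ?thesis using ij
        by (simp add: adj_mult_index[OF Uc Uc] Ci)
    next
      case False
      then show ?thesis using ij by (auto simp: Ci intro!: sum.neutral)
    qed
    also have "(if i < d \<and> j < d \<and> i = j then 1 else 0) + (if d \<le> i \<and> d \<le> j then (adj U * U) $$ (i - d, j - d) else 0)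
       = 1\<^sub>m (2*d) $$ (i,j)"
      using ij UU by auto
    finally show "(adj ?C * ?C) $$ (i,j) = 1\<^sub>m (2*d) $$ (i,j)" .
  qed
  then show ?thesis using ctrl_carrier[OF Uc] by (simp add: unitary_mat_def)
qed

lemma adj_mult: "A \<in> carrier_mat n n \<Longrightarrow> B \<in> carrier_mat n n \<Longrightarrow> adj (A * B) = adj B * adj A"
  apply (rule eq_matI)
  apply (auto simp: adj_index index_mult_mat scalar_prod_def adj_def intro!: sum.cong)
  done

lemma unitary_mult:
  assumes "unitary_mat n A" "unitary_mat n B" shows "unitary_mat n (A * B)"
proof -
  have A: "A \<in> carrier_mat n n" "adj A * A = 1\<^sub>m n" and B: "B \<in> carrier_mat n n" "adj B * B = 1\<^sub>m n"
    using assms by (auto simp: unitary_mat_def)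
  have aA: "adj A \<in> carrier_mat n n" and aB: "adj B \<in> carrier_mat n n" using A B adj_carrier by auto
  have "adj (A * B) * (A * B) = adj B * (adj A * (A * B))"
    using A B aA aB by (simp add: adj_mult assoc_mult_mat[of _ n n _ n _ n])
  also have "adj A * (A * B) = B" using A B aA by (metis assoc_mult_mat left_mult_one_mat)
  also have "adj B * B = 1\<^sub>m n" using B by simp
  finally show ?thesis using A B by (simp add: unitary_mat_def)
qed

lemma unitary_one: "unitary_mat n (1\<^sub>m n)"
  by (auto simp: unitary_mat_def adj_def intro!: eq_matI)



definition Xm :: "complex mat" where "Xm = mat 2 2 (\<lambda>(a,b). if a = b then 0 else 1)"
definition CNm :: "complex mat" where "CNm = mat 4 4 (\<lambda>(a,b). if b = (if a < 2 then a else 5 - a) then 1 else 0)"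

lemma less4_cases: "(i::nat) < 4 \<Longrightarrow> i = 0 \<or> i = 1 \<or> i = 2 \<or> i = 3" by auto

lemma unitary_Xm: "unitary_mat 2 Xm"
proof -
  have "adj Xm * Xm = 1\<^sub>m 2"
  proof (rule eq_matI)
    fix i j assume "i < dim_row (1\<^sub>m 2)" "j < dim_col (1\<^sub>m 2)"
    then have ij: "i < 2" "j < 2" by auto
    have c: "Xm \<in> carrier_mat 2 2" by (simp add: Xm_def)
    have "(adj Xm * Xm) $$ (i, j) = (\<Sum>k<2. cnj (Xm $$ (k,i)) * Xm $$ (k,j))"
      by (rule adj_mult_index[OF c c ij])
    also have "\<dots> = 1\<^sub>m 2 $$ (i, j)"
      using ij by (auto simp: numeral_2_eq_2 lessThan_Suc Xm_def less_Suc_eq)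
    finally show "(adj Xm * Xm) $$ (i, j) = 1\<^sub>m 2 $$ (i, j)" .
  qed (auto simp: Xm_def)
  then show ?thesis by (simp add: unitary_mat_def Xm_def)
qed

lemma unitary_CNm: "unitary_mat 4 CNm"
proof -
  have "adj CNm * CNm = 1\<^sub>m 4"
  proof (rule eq_matI)
    fix i j assume "i < dim_row (1\<^sub>m 4)" "j < dim_col (1\<^sub>m 4)"
    then have ij: "i < 4" "j < 4" by auto
    have c: "CNm \<in> carrier_mat 4 4" by (simp add: CNm_def)
    have s: "(\<Sum>k<4. f k) = f 0 + f 1 + f 2 + f (3::nat)" for f :: "nat \<Rightarrow> complex"
      by (simp add: eval_nat_numeral lessThan_Suc)
    have "(adj CNm * CNm) $$ (i, j) = (\<Sum>k<4. cnj (CNm $$ (k,i)) * CNm $$ (k,j))"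
      by (rule adj_mult_index[OF c c ij])
    also have "\<dots> = 1\<^sub>m 4 $$ (i, j)"
      using less4_cases[OF ij(1)] less4_cases[OF ij(2)]
      by (auto simp: s CNm_def)
    finally show "(adj CNm * CNm) $$ (i, j) = 1\<^sub>m 4 $$ (i, j)" .
  qed (auto simp: CNm_def)
  then show ?thesis by (simp add: unitary_mat_def CNm_def)
qed



lemma eqv_pos: "eqv m qs k l \<longleftrightarrow> (\<forall>p<m. (m-1-p) \<notin> set qs \<longrightarrow> bit k p = bit l p)"
proof
  assume e: "eqv m qs k l"
  show "\<forall>p<m. (m-1-p) \<notin> set qs \<longrightarrow> bit k p = bit l p"
  proof (intro allI impI)
    fix p assume p: "p<m" "m-1-p \<notin> set qs"
    then have "qbit m k (m-1-p) = qbit m l (m-1-p)" using e by (simp add: eqv_def)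
    moreover have "m-1-(m-1-p) = p" using p by simp
    ultimately show "bit k p = bit l p" by (simp add: qbit_bit split: if_splits)
  qed
next
  assume h: "\<forall>p<m. (m-1-p) \<notin> set qs \<longrightarrow> bit k p = bit l p"
  show "eqv m qs k l" unfolding eqv_def
  proof (intro allI impI)
    fix q assume q: "q<m" "q \<notin> set qs"
    have "m-1-(m-1-q) = q" using q by simp
    then have "bit k (m-1-q) = bit l (m-1-q)" using h q by (metis diff_less_Suc less_imp_diff_less Suc_pred' gr_implies_not0 not_gr0 diff_less zero_less_one)
    then show "qbit m k q = qbit m l q" by (simp add: qbit_bit)
  qed
qed

lemma eq_by_bits: "(l::nat) < 2^m \<Longrightarrow> x < 2^m \<Longrightarrow> (l = x) \<longleftrightarrow> (\<forall>p<m. bit l p = bit x p)"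
  using bits_eq by blast

lemma row_perm:
  assumes E: "(E::complex mat) \<in> carrier_mat N N" and M: "(M::complex mat) \<in> carrier_mat N N"
    and EF: "\<And>k l. k<N \<Longrightarrow> l<N \<Longrightarrow> E $$ (k,l) = (if l = F k then 1 else 0)"
    and k: "k<N" "F k < N" and j: "j<N"
  shows "(E * M) $$ (k,j) = M $$ (F k, j)"
proof -
  have "(E*M) $$ (k,j) = (\<Sum>r<N. E $$ (k,r) * M $$ (r,j))"
    using E M k j by (simp add: index_mult_mat scalar_prod_def atLeast0LessThan)
  also have "\<dots> = (\<Sum>r<N. if r = F k then M $$ (r,j) else 0)" using EF k by (intro sum.cong) auto
  also have "\<dots> = M $$ (F k, j)" using k by simp
  finally show ?thesis .
qed

lemma col_perm:
  assumes E: "(E::complex mat) \<in> carrier_mat N N" and M: "(M::complex mat) \<in> carrier_mat N N"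
    and EF: "\<And>k l. k<N \<Longrightarrow> l<N \<Longrightarrow> E $$ (k,l) = (if l = F k then 1 else 0)"
    and F: "\<And>r. r<N \<Longrightarrow> F r < N" "\<And>r. r<N \<Longrightarrow> F (F r) = r"
    and p: "p<N" and j: "j<N"
  shows "(M * E) $$ (p,j) = M $$ (p, F j)"
proof -
  have "(M*E) $$ (p,j) = (\<Sum>r<N. M $$ (p,r) * E $$ (r,j))"
    using E M p j by (simp add: index_mult_mat scalar_prod_def atLeast0LessThan)
  also have "\<dots> = (\<Sum>r<N. if r = F j then M $$ (p,r) else 0)"
  proof (intro sum.cong refl)
    fix r assume "r \<in> {..<N}"
    then have r: "r < N" by simp
    have "(j = F r) = (r = F j)" using F r j by metis
    then show "M $$ (p,r) * E $$ (r,j) = (if r = F j then M $$ (p,r) else 0)"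
      using EF[OF r j] by simp
  qed
  also have "\<dots> = M $$ (p, F j)" using F j by simp
  finally show ?thesis .
qed

lemma X_gate:
  assumes q: "q < m" and kl: "k < 2^m" "l < 2^m"
  shows "embed m [q] Xm $$ (k,l) = (if l = xor k (2^(m-1-q)) then 1 else 0)"
proof -
  define P where "P = m-1-q"
  have P: "P < m" using q by (simp add: P_def)
  have qP: "\<And>p. p < m \<Longrightarrow> (m-1-p = q) = (p = P)" using q unfolding P_def by auto
  have lt: "xor k (2^P) < 2^m" using kl P by (intro xor_lt) auto
  have "(eqv m [q] k l \<and> qbit m k q \<noteq> qbit m l q) \<longleftrightarrow> l = xor k (2^P)"
  proof -
    have "l = xor k (2^P) \<longleftrightarrow> (\<forall>p<m. bit l p = (bit k p \<noteq> (p = P)))"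
      using eq_by_bits[OF kl(2) lt] by (simp add: bit_xor_iff bit_exp_iff)
    also have "\<dots> \<longleftrightarrow> (\<forall>p<m. p \<noteq> P \<longrightarrow> bit k p = bit l p) \<and> bit k P \<noteq> bit l P"
      using P by auto
    also have "\<dots> \<longleftrightarrow> (eqv m [q] k l \<and> qbit m k q \<noteq> qbit m l q)"
      unfolding eqv_pos using qP by (auto simp: qbit_bit P_def)
    finally show ?thesis by simp
  qed
  moreover have "Xm $$ (qbit m k q, qbit m l q) = (if qbit m k q = qbit m l q then 0 else 1)"
    using qbit_lt2 by (simp add: Xm_def)
  ultimately show ?thesis using kl by (auto simp: embed_index P_def)
qed

lemma CN_gate:
  assumes pc: "pc < m" and pt: "pt < m" and d: "pc \<noteq> pt" and kl: "k < 2^m" "l < 2^m"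
  shows "embed m [m-1-pc, m-1-pt] CNm $$ (k,l) = (if l = xor k (if bit k pc then 2^pt else 0) then 1 else 0)"
proof -
  have lt: "xor k (if bit k pc then 2^pt else 0) < 2^m" using kl pt by (intro xor_lt) auto
  have qc: "m-1-(m-1-pc) = pc" and qt: "m-1-(m-1-pt) = pt" using pc pt by auto
  have qP: "\<And>p. p < m \<Longrightarrow> (m-1-p = m-1-pc) = (p = pc)" "\<And>p. p < m \<Longrightarrow> (m-1-p = m-1-pt) = (p = pt)"
    using pc pt by auto
  let ?b = "\<lambda>x p. (if bit x p then 1 else 0) :: nat"
  have sk: "sub_index m x [m-1-pc, m-1-pt] = ?b x pc * 2 + ?b x pt" for x
    using qc qt by (simp add: qbit_bit)
  have "l = xor k (if bit k pc then 2^pt else 0) \<longleftrightarrow> (\<forall>p<m. bit l p = (bit k p \<noteq> (bit k pc \<and> p = pt)))"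
    using eq_by_bits[OF kl(2) lt] by (simp add: bit_xor_iff bit_exp_iff)
  also have "\<dots> \<longleftrightarrow> (\<forall>p<m. p \<noteq> pc \<and> p \<noteq> pt \<longrightarrow> bit k p = bit l p) \<and>
       bit l pc = bit k pc \<and> bit l pt = (bit k pt \<noteq> bit k pc)"
    using pc pt d by auto
  also have "\<dots> \<longleftrightarrow> eqv m [m-1-pc, m-1-pt] k l \<and>
       bit l pc = bit k pc \<and> bit l pt = (bit k pt \<noteq> bit k pc)"
    unfolding eqv_pos using qP by auto
  finally have e: "l = xor k (if bit k pc then 2^pt else 0) \<longleftrightarrow> eqv m [m-1-pc, m-1-pt] k l \<and>
       bit l pc = bit k pc \<and> bit l pt = (bit k pt \<noteq> bit k pc)" .
  have sl: "sub_index m x [m-1-pc, m-1-pt] < 4" for x using sub_lt[of m x "[m-1-pc, m-1-pt]"] by simp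
  have c: "CNm $$ (sub_index m k [m-1-pc, m-1-pt], sub_index m l [m-1-pc, m-1-pt]) =
     (if bit l pc = bit k pc \<and> bit l pt = (bit k pt \<noteq> bit k pc) then 1 else 0)"
    unfolding sk by (cases "bit k pc"; cases "bit k pt"; cases "bit l pc"; cases "bit l pt") (simp_all add: CNm_def)
  show ?thesis by (simp only: embed_index[OF kl] c e) auto
qed



definition xg :: gate where "xg = Fixed Xm [2]"
definition qg :: "nat \<Rightarrow> gate" where "qg n = Query False [2..<n+3]"
definition cng :: "nat \<Rightarrow> nat \<Rightarrow> gate" where
  "cng n p = Fixed CNm [n+(n+3)-1-p, n+(n+3)-1-(n+p)]"
definition circ :: "nat \<Rightarrow> circuit" where
  "circ n = [[xg],[qg n],[xg]] @ map (\<lambda>p. [cng n p]) [0..<n]"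

lemma gate_carrier: "gate_mat m U g \<in> carrier_mat (2^m) (2^m)"
  by (cases g) (auto simp: embed_carrier)

lemma layer_single: "layer_mat m U [g] = gate_mat m U g"
  using gate_carrier[of m U g] by (simp add: layer_mat_def)

lemma layer_carrier: "layer_mat m U L \<in> carrier_mat (2^m) (2^m)"
  by (induction L) (auto simp: layer_mat_def intro!: mult_carrier_mat[OF gate_carrier])

lemma fold_carrier: "M \<in> carrier_mat (2^m) (2^m) \<Longrightarrow>
  foldl (\<lambda>M L. layer_mat m U L * M) M Ls \<in> carrier_mat (2^m) (2^m)"
  by (induction Ls arbitrary: M) (auto intro!: mult_carrier_mat[OF layer_carrier])

lemma layer_unitary: "(\<forall>g\<in>set L. unitary_mat (2^m) (gate_mat m U g)) \<Longrightarrow> unitary_mat (2^m) (layer_mat m U L)"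
proof (induction L)
  case Nil then show ?case by (simp add: layer_mat_def unitary_one)
next
  case (Cons g L)
  then show ?case using unitary_mult[of "2^m" "gate_mat m U g" "layer_mat m U L"]
    by (simp add: layer_mat_def)
qed

lemma fold_unitary: "unitary_mat (2^m) M \<Longrightarrow> (\<forall>L\<in>set Ls. unitary_mat (2^m) (layer_mat m U L)) \<Longrightarrow>
  unitary_mat (2^m) (foldl (\<lambda>M L. layer_mat m U L * M) M Ls)"
  by (induction Ls arbitrary: M) (auto intro: unitary_mult)

lemma wf_single: "wf_gate m n g \<Longrightarrow> wf_layer m n [g]"
  by (simp add: wf_layer_def)

context
  fixes n :: nat and U :: "complex mat"
  assumes n1: "n \<ge> 1" and U: "unitary_mat (2^n) U"
begin

abbreviation "mq \<equiv> n + (n + 3)"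

lemma Uc: "U \<in> carrier_mat (2^n) (2^n)" using U by (simp add: unitary_mat_def)

lemma wf_circ: "wf_circuit mq n (circ n)"
proof -
  have "wf_gate mq n xg" using unitary_Xm by (simp add: xg_def)
  moreover have "wf_gate mq n (qg n)" by (auto simp: qg_def)
  moreover have "wf_gate mq n (cng n p)" if "p < n" for p
    using unitary_CNm that n1 by (auto simp: cng_def)
  ultimately show ?thesis by (auto simp: wf_circuit_def circ_def intro!: wf_single)
qed

lemma depth_circ: "depth (circ n) \<le> 4 * n"
  using n1 by (simp add: depth_def circ_def)

lemma queries_circ: "num_queries (circ n) \<le> 1"
proof -
  have "map (\<lambda>L. length (filter is_query L)) (map (\<lambda>p. [cng n p]) [0..<n]) = map (\<lambda>p. 0) [0..<n]"
    by (simp add: cng_def)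
  then show ?thesis by (simp add: num_queries_def circ_def xg_def qg_def cng_def)
qed

lemma unitary_circ: "unitary_mat (2^mq) (circuit_mat mq U (circ n))"
proof -
  have gX: "unitary_mat (2^mq) (gate_mat mq U xg)"
    using unitary_Xm by (simp add: xg_def unitary_embed)
  have gQ: "unitary_mat (2^mq) (gate_mat mq U (qg n))"
  proof -
    have "unitary_mat (2^length [2..<n+3]) (ctrl U)"
      using unitary_ctrl[OF U] by simp
    then have "unitary_mat (2^mq) (embed mq [2..<n+3] (ctrl U))"
      by (intro unitary_embed) auto
    then show ?thesis by (simp add: qg_def)
  qed
  have gC: "unitary_mat (2^mq) (gate_mat mq U (cng n p))" if "p < n" for p
  proof -
    have "unitary_mat (2^mq) (embed mq [mq-1-p, mq-1-(n+p)] CNm)"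
      using unitary_CNm that n1 by (intro unitary_embed) auto
    then show ?thesis by (simp add: cng_def)
  qed
  show ?thesis unfolding circuit_mat_def
    using gX gQ gC by (intro fold_unitary unitary_one) (auto simp: circ_def layer_single)
qed

end



lemma sub_range: "hi \<le> m \<Longrightarrow> lo \<le> hi \<Longrightarrow> sub_index m k [lo..<hi] = (k div 2^(m-hi)) mod 2^(hi-lo)"
proof (induction "hi - lo" arbitrary: lo)
  case 0 then show ?case by simp
next
  case (Suc d)
  then have lohi: "lo < hi" by simp
  have up: "[lo..<hi] = lo # [Suc lo..<hi]" using lohi by (simp add: upt_conv_Cons)
  have IH: "sub_index m k [Suc lo..<hi] = (k div 2^(m-hi)) mod 2^(hi - Suc lo)"
    using Suc lohi by (intro Suc.hyps(1)) auto
  define x where "x = k div 2^(m-hi)"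
  define d' where "d' = hi - Suc lo"
  have e1: "k div 2^(m-1-lo) = x div 2^d'"
  proof -
    have "m-1-lo = (m-hi) + d'" using Suc.prems lohi by (simp add: d'_def)
    then show ?thesis by (simp add: x_def power_add div_mult2_eq)
  qed
  have "sub_index m k [lo..<hi] = (x div 2^d' mod 2) * 2^d' + x mod 2^d'"
    using up IH e1 by (simp add: qbit_def x_def d'_def)
  also have "\<dots> = x mod (2^d' * 2)"
    by (metis mod_mult2_eq mult.commute)
  also have "2^d' * 2 = (2::nat)^(hi-lo)" using lohi unfolding d'_def by (metis Suc_diff_Suc power_Suc2)
  finally show ?case by (simp add: x_def)
qed

lemma bit_sub_range: "hi \<le> m \<Longrightarrow> lo \<le> hi \<Longrightarrow>
   bit (sub_index m k [lo..<hi]) x \<longleftrightarrow> x < hi - lo \<and> bit k (m - hi + x)"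
proof -
  assume a: "hi \<le> m" "lo \<le> hi"
  have "(k div 2^(m-hi)) mod 2^(hi-lo) = take_bit (hi-lo) (drop_bit (m-hi) k)"
    by (simp add: take_bit_eq_mod drop_bit_eq_div)
  then show ?thesis using a by (simp add: sub_range bit_take_bit_iff bit_drop_bit_eq)
qed

context
  fixes n :: nat and U :: "complex mat"
  assumes n1: "n \<ge> 1" and U: "unitary_mat (2^n) U"
begin


definition FX :: "nat \<Rightarrow> nat" where "FX k = xor k (2^(2*n))"
definition Fn :: "nat \<Rightarrow> nat \<Rightarrow> nat" where "Fn p k = xor k (if bit k p then 2^(n+p) else 0)"
definition gfun :: "nat \<Rightarrow> nat \<Rightarrow> nat" where "gfun T i = xor i (push_bit n (take_bit T i))"

lemma m2: "(mq n) - 1 - 2 = 2 * n" by simp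

lemma FX_lt: "k < 2^(mq n) \<Longrightarrow> FX k < 2^(mq n)"
  unfolding FX_def by (intro xor_lt) auto

lemma FX_FX: "FX (FX k) = k"
  unfolding FX_def by (rule bit_eqI) (auto simp: bit_xor_iff)

lemma EX_index: "k < 2^(mq n) \<Longrightarrow> l < 2^(mq n) \<Longrightarrow> gate_mat (mq n) U xg $$ (k,l) = (if l = FX k then 1 else 0)"
  using X_gate[of 2 "mq n" k l] by (simp add: xg_def FX_def m2)

lemma ECN_index: "p < n \<Longrightarrow> k < 2^(mq n) \<Longrightarrow> l < 2^(mq n) \<Longrightarrow>
   gate_mat (mq n) U (cng n p) $$ (k,l) = (if l = Fn p k then 1 else 0)"
  unfolding cng_def gate_mat.simps Fn_def using n1 by (intro CN_gate) auto

lemma Fn_lt: "p < n \<Longrightarrow> k < 2^(mq n) \<Longrightarrow> Fn p k < 2^(mq n)"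
  unfolding Fn_def by (intro xor_lt) auto

lemma g_step: "T < n \<Longrightarrow> gfun T (Fn T i) = gfun (Suc T) i"
  unfolding gfun_def Fn_def
  by (rule bit_eqI) (auto simp: bit_xor_iff bit_push_bit_iff bit_take_bit_iff bit_exp_iff less_Suc_eq)

lemma cn_fold: "T \<le> n \<Longrightarrow> M \<in> carrier_mat (2^(mq n)) (2^(mq n)) \<Longrightarrow> i < 2^(mq n) \<Longrightarrow> j < 2^(mq n) \<Longrightarrow>
  (foldl (\<lambda>M L. layer_mat (mq n) U L * M) M (map (\<lambda>p. [cng n p]) [0..<T])) $$ (i,j) = M $$ (gfun T i, j)"
proof (induction T arbitrary: i)
  case 0 then show ?case by (simp add: gfun_def)
next
  case (Suc T)
  let ?P = "foldl (\<lambda>M L. layer_mat (mq n) U L * M) M (map (\<lambda>p. [cng n p]) [0..<T])"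
  have Pc: "?P \<in> carrier_mat (2^(mq n)) (2^(mq n))" using Suc.prems by (intro fold_carrier)
  have Tn: "T < n" using Suc.prems by simp
  have E: "\<And>k l. k < 2^(mq n) \<Longrightarrow> l < 2^(mq n) \<Longrightarrow>
     gate_mat (mq n) U (cng n T) $$ (k,l) = (if l = Fn T k then 1 else 0)" using ECN_index[OF Tn] .
  have Fl: "Fn T i < 2^(mq n)" using Fn_lt[OF Tn Suc.prems(3)] .
  have "(foldl (\<lambda>M L. layer_mat (mq n) U L * M) M (map (\<lambda>p. [cng n p]) [0..<Suc T])) $$ (i,j)
      = (gate_mat (mq n) U (cng n T) * ?P) $$ (i,j)"
    by (simp add: layer_single)
  also have "(gate_mat (mq n) U (cng n T) * ?P) $$ (i,j) = ?P $$ (Fn T i, j)"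
    by (rule row_perm[OF gate_carrier Pc E Suc.prems(3) Fl Suc.prems(4)])
  also have "\<dots> = M $$ (gfun T (Fn T i), j)"
    using Suc.prems Tn Fl by (intro Suc.IH) auto
  also have "\<dots> = M $$ (gfun (Suc T) i, j)" using Suc.prems g_step by simp
  finally show ?case .
qed


lemma V_entry:
  assumes i: "i < 2^n" and j: "j < 2^n"
  shows "circuit_mat (mq n) U (circ n) $$ (i,j) = (if i = j then U $$ (i,0) else 0)"
proof -
  let ?N = "2^(mq n) :: nat"
  let ?EX = "gate_mat (mq n) U xg"
  let ?EQ = "gate_mat (mq n) U (qg n)"
  have Uc: "U \<in> carrier_mat (2^n) (2^n)" using U by (simp add: unitary_mat_def)
  have nN: "(2::nat)^n \<le> ?N" by (intro power_increasing) auto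
  have n2N: "(2::nat)^n * 2^n \<le> ?N" by (simp add: power_add[symmetric])
  have iN: "i < ?N" using less_le_trans[OF i nN] .
  have jN: "j < ?N" using less_le_trans[OF j nN] .
  define W where "W = ?EX * (?EQ * ?EX)"
  have EQEXc: "?EQ * ?EX \<in> carrier_mat ?N ?N" by (rule mult_carrier_mat[OF gate_carrier gate_carrier])
  have Wc: "W \<in> carrier_mat ?N ?N" unfolding W_def by (rule mult_carrier_mat[OF gate_carrier EQEXc])
  have circ_eq: "circuit_mat (mq n) U (circ n) = foldl (\<lambda>M L. layer_mat (mq n) U L * M) W (map (\<lambda>p. [cng n p]) [0..<n])"
    by (simp add: circuit_mat_def circ_def layer_single W_def right_mult_one_mat[OF gate_carrier])
  have gi: "gfun n i = xor i (push_bit n i)"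
  proof -
    have "take_bit n i = i" using i by (simp add: take_bit_nat_eq_self_iff)
    then show ?thesis by (simp add: gfun_def)
  qed
  have pN: "push_bit n i < ?N"
  proof -
    have "push_bit n i = i * 2^n" by (simp add: push_bit_eq_mult)
    also have "\<dots> < 2^n * 2^n" using i by simp
    finally show ?thesis using n2N by linarith
  qed
  have gN: "gfun n i < ?N" unfolding gi using iN pN by (intro xor_lt)
  have EX: "\<And>k l. k < ?N \<Longrightarrow> l < ?N \<Longrightarrow> ?EX $$ (k,l) = (if l = FX k then 1 else 0)"
    using EX_index .
  have "circuit_mat (mq n) U (circ n) $$ (i,j) = W $$ (gfun n i, j)"
    unfolding circ_eq using Wc iN jN by (intro cn_fold) auto
  also have "\<dots> = (?EQ * ?EX) $$ (FX (gfun n i), j)"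
    unfolding W_def by (rule row_perm[OF gate_carrier EQEXc EX gN FX_lt[OF gN] jN])
  also have "\<dots> = ?EQ $$ (FX (gfun n i), FX j)"
    by (rule col_perm[OF gate_carrier gate_carrier EX FX_lt FX_FX FX_lt[OF gN] jN])
  also have "\<dots> = (if i = j then U $$ (i,0) else 0)"
  proof -
    define a where "a = FX (gfun n i)"
    define b where "b = FX j"
    have aN: "a < ?N" and bN: "b < ?N" unfolding a_def b_def using FX_lt gN jN by auto
    have hi: "\<And>x. bit i x \<Longrightarrow> x < n" using i nat_high_bit not_less by blast
    have hj: "\<And>x. bit j x \<Longrightarrow> x < n" using j nat_high_bit not_less by blast
    have ba: "bit a p \<longleftrightarrow> ((bit i p \<noteq> (n \<le> p \<and> bit i (p - n))) \<noteq> (p = 2*n))" for p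
      unfolding a_def FX_def gi by (simp add: bit_xor_iff bit_push_bit_iff bit_exp_iff)
    have bb: "bit b p \<longleftrightarrow> (bit j p \<noteq> (p = 2*n))" for p
      unfolding b_def FX_def by (simp add: bit_xor_iff bit_exp_iff)
    have cond: "\<And>p. p < mq n \<Longrightarrow> (mq n - 1 - p \<notin> set [2..<n+3]) \<longleftrightarrow> (p < n \<or> 2*n < p)"
      by auto
    have eq: "eqv (mq n) [2..<n+3] a b \<longleftrightarrow> i = j"
    proof
      assume e: "eqv (mq n) [2..<n+3] a b"
      have "\<forall>p<n. bit i p = bit j p"
      proof (intro allI impI)
        fix p assume p: "p < n"
        then have "bit a p = bit b p" using e cond[of p] unfolding eqv_pos by auto
        then show "bit i p = bit j p" using p ba bb by auto
      qed
      then show "i = j" using i j bits_eq by blast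
    next
      assume "i = j"
      show "eqv (mq n) [2..<n+3] a b" unfolding eqv_pos
      proof (intro allI impI)
        fix p assume p: "p < mq n" "mq n - 1 - p \<notin> set [2..<n+3]"
        then have "p < n \<or> 2*n < p" using cond by blast
        then show "bit a p = bit b p"
        proof
          assume "p < n" then show ?thesis using ba bb \<open>i = j\<close> by auto
        next
          assume pp: "2*n < p"
          then have "\<not> bit i p" "\<not> bit i (p - n)" "\<not> bit j p" using hi hj by fastforce+
          then show ?thesis using ba bb pp by auto
        qed
      qed
    qed
    have sr: "bit (sub_index (mq n) k [2..<n+3]) x \<longleftrightarrow> x < n + 1 \<and> bit k (n + x)" for k x
      using bit_sub_range[of "n+3" "mq n" 2 k x] by simp
    have d1: "2^n + i = or (2^n) i"
      by (rule disjunctive_add) (auto simp: bit_exp_iff dest: hi)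
    have sa: "sub_index (mq n) a [2..<n+3] = 2^n + i"
      unfolding d1 by (rule bit_eqI) (simp only: sr, auto simp: ba bit_or_iff bit_exp_iff dest: hi)
    have sb: "sub_index (mq n) b [2..<n+3] = 2^n"
      by (rule bit_eqI) (simp only: sr, auto simp: bb bit_exp_iff dest: hj)
    have cu: "ctrl U $$ (2^n + i, 2^n) = U $$ (i, 0)"
      using Uc i by (simp add: ctrl_def)
    show ?thesis
      unfolding a_def[symmetric] b_def[symmetric] qg_def gate_mat.simps if_False
      by (simp only: embed_index[OF aN bN] eq sa sb cu)
  qed
  finally show ?thesis .
qed

end



lemma opnorm_zero: "opnorm (0\<^sub>m r c) = 0"
proof -
  have z: "vnorm (0\<^sub>m r c *\<^sub>v v) = 0" if "v \<in> carrier_vec c" for v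
  proof -
    have "0\<^sub>m r c *\<^sub>v v = 0\<^sub>v r"
      using that by (intro eq_vecI) (auto simp: scalar_prod_def)
    then show ?thesis by (simp add: vnorm_def)
  qed
  have v0: "vnorm (0\<^sub>v c) \<le> 1" by (simp add: vnorm_def)
  have "{vnorm (0\<^sub>m r c *\<^sub>v v) | v. v \<in> carrier_vec (dim_col (0\<^sub>m r c)) \<and> vnorm v \<le> 1} = {0}"
  proof
    show "{vnorm (0\<^sub>m r c *\<^sub>v v) | v. v \<in> carrier_vec (dim_col (0\<^sub>m r c)) \<and> vnorm v \<le> 1} \<subseteq> {0}"
      using z by auto
    show "{0} \<subseteq> {vnorm (0\<^sub>m r c *\<^sub>v v) | v. v \<in> carrier_vec (dim_col (0\<^sub>m r c)) \<and> vnorm v \<le> 1}"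
      using z[of "0\<^sub>v c"] v0 by force
  qed
  then show ?thesis by (simp add: opnorm_def)
qed

theorem theorem2:
  shows "\<exists>(c_depth::nat) (c_query::nat). \<forall>n::nat. n \<ge> 1 \<longrightarrow>
     (\<exists>C. wf_circuit (n + (n + 3)) n C \<and>
          depth C \<le> c_depth * n \<and> num_queries C \<le> c_query \<and>
          (\<forall>U. unitary_mat (2^n) U \<longrightarrow>
             block_encoding n (diag_of_vec (col U 0)) 1 (n + 3) 0
               (circuit_mat (n + (n + 3)) U C)))"
proof (rule exI[of _ 4], rule exI[of _ 1], intro allI impI)
  fix n :: nat assume n1: "n \<ge> 1"
  have U1: "unitary_mat (2^n) (1\<^sub>m (2^n))" by (rule unitary_one)
  show "\<exists>C. wf_circuit (n + (n + 3)) n C \<and>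
          depth C \<le> 4 * n \<and> num_queries C \<le> 1 \<and>
          (\<forall>U. unitary_mat (2^n) U \<longrightarrow>
             block_encoding n (diag_of_vec (col U 0)) 1 (n + 3) 0
               (circuit_mat (n + (n + 3)) U C))"
  proof (intro exI[of _ "circ n"] conjI allI impI)
    show "wf_circuit (n + (n + 3)) n (circ n)" using wf_circ[OF n1 U1] .
    show "depth (circ n) \<le> 4 * n" using depth_circ[OF n1 U1] .
    show "num_queries (circ n) \<le> 1" using queries_circ[OF n1 U1] .
    fix U assume U: "unitary_mat (2^n) U"
    have Uc: "U \<in> carrier_mat (2^n) (2^n)" using U by (simp add: unitary_mat_def)
    let ?V = "circuit_mat (n + (n + 3)) U (circ n)"
    let ?A = "diag_of_vec (col U 0)"
    have Ac: "?A \<in> carrier_mat (2^n) (2^n)" using Uc by (simp add: diag_of_vec_def)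
    have "?A - complex_of_real 1 \<cdot>\<^sub>m top_block n ?V = 0\<^sub>m (2^n) (2^n)"
    proof (rule eq_matI)
      fix i j assume "i < dim_row (0\<^sub>m (2^n) (2^n) :: complex mat)" "j < dim_col (0\<^sub>m (2^n) (2^n) :: complex mat)"
      then have ij: "i < 2^n" "j < 2^n" by auto
      show "(?A - complex_of_real 1 \<cdot>\<^sub>m top_block n ?V) $$ (i,j) = 0\<^sub>m (2^n) (2^n) $$ (i,j)"
        using ij Uc V_entry[OF n1 U ij] by (simp add: diag_of_vec_def top_block_def)
    qed (use Uc in \<open>auto simp: diag_of_vec_def top_block_def\<close>)
    then show "block_encoding n ?A 1 (n + 3) 0 ?V"
      unfolding block_encoding_def using Ac unitary_circ[OF n1 U] opnorm_zero by simp
  qed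
qed


end
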